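(* Let $K$ be a field, $c\in K\setminus\{0\}$, and let $(x_j)_{j\in\mathbb{Z}}$ be indeterminates; define $x'_{2l}=x_{2l}$ and $x'_{2l+1}=-x_{2l+1}$ for all $l\in\mathbb{Z}$. Let $k\ge0$ and $j\in\mathbb{Z}$. (a) If $k\equiv0\pmod4$, then $P_k^{-c}(x'_j,\dots,x'_{j+k-1})=P_k^c(x_j,\dots,x_{j+k-1})$. (b) If $k\equiv1\pmod4$, then $P_k^{-c}(x'_j,\dots,x'_{j+k-1})=P_k^c(x_j,\dots,x_{j+k-1})$ for $j$ even and $=-P_k^c(x_j,\dots,x_{j+k-1})$ for $j$ odd. (c) If $k\equiv2\pmod4$, then $P_k^{-c}(x'_j,\dots,x'_{j+k-1})=-P_k^c(x_j,\dots,x_{j+k-1})$. (d) If $k\equiv3\pmod4$, then $P_k^{-c}(x'_j,\dots,x'_{j+k-1})=-P_k^c(x_j,\dots,x_{j+k-1})$ for $j$ even and $=P_k^c(x_j,\dots,x_{j+k-1})$ for $j$ odd.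
   Context: For a nonzero $a\in K$, the $a$-continuant polynomials $P_k^a$ ($k\ge -1$) are defined by $P_{-1}^a=0$, $P_0^a=1$ and, for $k\ge1$, $P_k^a(y_1,\dots,y_k)=y_kP_{k-1}^a(y_1,\dots,y_{k-1})+aP_{k-2}^a(y_1,\dots,y_{k-2})$, applied to any sequence of consecutive variables. *)

theory Defs
  imports Main
begin

fun continuant :: "'a::comm_ring_1 \<Rightarrow> (nat \<Rightarrow> 'a) \<Rightarrow> nat \<Rightarrow> 'a" where
  "continuant a y 0 = 1"
| "continuant a y (Suc 0) = y 1"
| "continuant a y (Suc (Suc k)) = y (Suc (Suc k)) * continuant a y (Suc k) + a * continuant a y k"

text \<open>P_k^a(z_j, ..., z_{j+k-1}) for an integer-indexed family z.\<close>
definition contAt :: "'a::comm_ring_1 \<Rightarrow> (int \<Rightarrow> 'a) \<Rightarrow> int \<Rightarrow> nat \<Rightarrow> 'a" where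
  "contAt a z j k = continuant a (\<lambda>i. z (j + int i - 1)) k"

definition signAlt :: "(int \<Rightarrow> 'a::comm_ring_1) \<Rightarrow> int \<Rightarrow> 'a" where
  "signAlt x i = (if even i then x i else - x i)"

end

theory Submission
  imports Defs
begin

lemma cont_sign:
  fixes c :: "'a::comm_ring_1"
  assumes alt: "\<And>i. e i * e (Suc i) = -1"
  shows "continuant (-c) (\<lambda>i. e i * y i) k = (\<Prod>i=1..k. e i) * continuant c y k"
proof (induction c y k rule: continuant.induct)
  case (1 a y) thus ?case by simp
next
  case (2 a y) thus ?case by simp
next
  case (3 a y k)
  have P2: "(\<Prod>i=1..Suc (Suc k). e i) = (\<Prod>i=1..k. e i) * (e (Suc k) * e (Suc (Suc k)))"
    by (simp add: prod.nat_ivl_Suc' mult.assoc)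
  have P1: "(\<Prod>i=1..Suc k. e i) = (\<Prod>i=1..k. e i) * e (Suc k)"
    by (simp add: prod.nat_ivl_Suc')
  have a2: "e (Suc k) * e (Suc (Suc k)) = -1" by (rule alt)
  have "continuant (-a) (\<lambda>i. e i * y i) (Suc (Suc k))
     = (\<Prod>i=1..k. e i) * (e (Suc k) * e (Suc (Suc k))) * (y (Suc (Suc k)) * continuant a y (Suc k))
       - a * ((\<Prod>i=1..k. e i) * continuant a y k)"
    using 3 unfolding P1 by (simp add: algebra_simps)
  also have "\<dots> = (\<Prod>i=1..Suc (Suc k). e i) * continuant a y (Suc (Suc k))"
    unfolding P2 a2 by (simp add: algebra_simps)
  finally show ?case .
qed

definition eps :: "int \<Rightarrow> 'a::comm_ring_1" where
  "eps m = (if even m then 1 else -1)"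

lemma prod_eps:
  "(\<Prod>i=1..k. (eps (j + int i - 1) :: 'a::comm_ring_1)) =
     (-1) ^ (k div 2) * (if odd k then eps j else 1)"
proof (induction k rule: nat_less_induct)
  case (1 k)
  show ?case
  proof (cases k)
    case 0 thus ?thesis by simp
  next
    case (Suc m) note m = this
    show ?thesis
    proof (cases m)
      case 0 thus ?thesis using m by simp
    next
      case (Suc n)
      have IH: "(\<Prod>i=1..n. (eps (j + int i - 1) :: 'a)) = (-1) ^ (n div 2) * (if odd n then eps j else 1)"
        using 1 m Suc by auto
      have pr: "(eps (j + int (Suc n) - 1) :: 'a) * eps (j + int (Suc (Suc n)) - 1) = -1"
        by (auto simp: eps_def)
      have "(\<Prod>i=1..k. (eps (j + int i - 1) :: 'a)) = (\<Prod>i=1..n. (eps (j + int i - 1) :: 'a)) *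
          (eps (j + int (Suc n) - 1) * eps (j + int (Suc (Suc n)) - 1))"
        using m Suc by (simp add: prod.nat_ivl_Suc' mult.assoc del: of_nat_Suc)
      also have "\<dots> = - ((-1) ^ (n div 2) * (if odd n then eps j else 1))"
        using IH pr by simp
      finally show ?thesis using m Suc by simp
    qed
  qed
qed

theorem mainTheorem6:
  fixes c :: "'a::comm_ring_1" and x :: "int \<Rightarrow> 'a" and k :: nat and j :: int
  assumes "c \<noteq> 0"
  shows "(k mod 4 = 0 \<longrightarrow> contAt (-c) (signAlt x) j k = contAt c x j k)
       \<and> (k mod 4 = 1 \<longrightarrow> contAt (-c) (signAlt x) j k =
            (if even j then contAt c x j k else - contAt c x j k))
       \<and> (k mod 4 = 2 \<longrightarrow> contAt (-c) (signAlt x) j k = - contAt c x j k)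
       \<and> (k mod 4 = 3 \<longrightarrow> contAt (-c) (signAlt x) j k =
            (if even j then - contAt c x j k else contAt c x j k))"
proof -
  define e where "e = (\<lambda>i::nat. (eps (j + int i - 1) :: 'a))"
  have alt: "\<And>i. e i * e (Suc i) = -1" by (auto simp: e_def eps_def)
  have eq: "(\<lambda>i. signAlt x (j + int i - 1)) = (\<lambda>i. e i * x (j + int i - 1))"
    by (auto simp: e_def eps_def signAlt_def)
  have main: "contAt (-c) (signAlt x) j k =
      ((-1) ^ (k div 2) * (if odd k then eps j else 1)) * contAt c x j k"
  proof -
    have "contAt (-c) (signAlt x) j k = (\<Prod>i=1..k. e i) * contAt c x j k"
      unfolding contAt_def eq by (rule cont_sign[of e, OF alt])
    thus ?thesis unfolding e_def prod_eps .
  qed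
  have ev: "even (k div 2) \<longleftrightarrow> k mod 4 = 0 \<or> k mod 4 = 1" by presburger
  have od: "odd k \<longleftrightarrow> k mod 4 = 1 \<or> k mod 4 = 3" by presburger
  show ?thesis unfolding main
    using ev od by (auto simp: eps_def)
qed

end
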